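(* Let $A$ be a slender adornment with base $[x,y]$. For every point $z\in A$, the half-lens $\hat L(z)$ is contained in $A$. If moreover $A$ is symmetric, then the full lens $L(z)$ is contained in $A$ for every $z \in A$.
   Context: An adornment is a compact simply connected region $S\subset\mathbb{R}^2$ (the shape) together with a segment $[x,y]$, $x\neq y$, whose endpoints lie on the boundary of $S$ and with $[x,y]\subseteq S$ (the base). The boundary of $S$ consists of two arcs from $x$ to $y$, called the sides. The adornment is slender if, for a point $p$ moving along either side from $x$ to $y$, the distance $\|p-x\|$ is monotonically nondecreasing and the distance $\|p-y\|$ is monotonically nonincreasing (not necessarily strictly). It is symmetric if it is invariant under reflection in the line through $x$ and $y$. For a point $z$ with $\|z-x\|\le\|y-x\|$ and $\|z-y\|\le\|x-y\|$, the lens $L(z)$ is the intersection of the closed disk centered at $x$ of radius $\|z-x\|$ and the closed disk centered at $y$ of radius $\|z-y\|$; the half-lens $\hat L(z)$ is the intersection of $L(z)$ with the closed half-plane bounded by the line through $x,y$ that contains $z$. *)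

theory Defs
  imports "HOL-Analysis.Analysis"
begin

(* The plane R^2 is modelled by the type complex. *)

(* Signed cross product of (y - x) and (w - x): its sign tells on which side of the
   line through x and y the point w lies. *)
definition side_sign :: "complex \<Rightarrow> complex \<Rightarrow> complex \<Rightarrow> real" where
  "side_sign x y w = Im (cnj (y - x) * (w - x))"

definition adornment_sides ::
  "complex set \<Rightarrow> complex \<Rightarrow> complex \<Rightarrow> (real \<Rightarrow> complex) \<Rightarrow> (real \<Rightarrow> complex) \<Rightarrow> bool" where
  "adornment_sides S x y g1 g2 \<longleftrightarrow>
     arc g1 \<and> arc g2 \<and>
     pathstart g1 = x \<and> pathfinish g1 = y \<and>
     pathstart g2 = x \<and> pathfinish g2 = y \<and>
     frontier S = path_image g1 \<union> path_image g2 \<and>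
     path_image g1 \<inter> path_image g2 = {x, y}"

definition adornment :: "complex set \<Rightarrow> complex \<Rightarrow> complex \<Rightarrow> bool" where
  "adornment S x y \<longleftrightarrow>
     compact S \<and> simply_connected S \<and> x \<noteq> y \<and>
     x \<in> frontier S \<and> y \<in> frontier S \<and> closed_segment x y \<subseteq> S \<and>
     (\<exists>g1 g2. adornment_sides S x y g1 g2)"

definition slender_side :: "complex \<Rightarrow> complex \<Rightarrow> (real \<Rightarrow> complex) \<Rightarrow> bool" where
  "slender_side x y g \<longleftrightarrow>
     (\<forall>s t. 0 \<le> s \<and> s \<le> t \<and> t \<le> 1 \<longrightarrow>
        dist (g s) x \<le> dist (g t) x \<and> dist (g t) y \<le> dist (g s) y)"

definition slender :: "complex set \<Rightarrow> complex \<Rightarrow> complex \<Rightarrow> bool" where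
  "slender S x y \<longleftrightarrow> adornment S x y \<and>
     (\<forall>g1 g2. adornment_sides S x y g1 g2 \<longrightarrow> slender_side x y g1 \<and> slender_side x y g2)"

definition reflect_line :: "complex \<Rightarrow> complex \<Rightarrow> complex \<Rightarrow> complex" where
  "reflect_line x y w = x + (y - x) * cnj ((w - x) / (y - x))"

definition symmetric_adornment :: "complex set \<Rightarrow> complex \<Rightarrow> complex \<Rightarrow> bool" where
  "symmetric_adornment S x y \<longleftrightarrow> adornment S x y \<and> reflect_line x y ` S = S"

definition lens :: "complex \<Rightarrow> complex \<Rightarrow> complex \<Rightarrow> complex set" where
  "lens x y z = cball x (dist z x) \<inter> cball y (dist z y)"

(* closed half-plane bounded by line xy containing z (whole plane if z is on the line) *)
definition half_lens :: "complex \<Rightarrow> complex \<Rightarrow> complex \<Rightarrow> complex set" where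
  "half_lens x y z = lens x y z \<inter> {w. side_sign x y z * side_sign x y w \<ge> 0}"

end

theory Submission
  imports Defs "HOL-Complex_Analysis.Complex_Analysis"
begin

definition zt :: "complex \<Rightarrow> complex \<Rightarrow> complex \<Rightarrow> complex" where
  "zt x y v = (v - x) / (y - x)"

lemma zt_x [simp]: "zt x y x = 0" by (simp add: zt_def)
lemma zt_y [simp]: "x \<noteq> y \<Longrightarrow> zt x y y = 1" by (simp add: zt_def)

lemma zt_recover: "x \<noteq> y \<Longrightarrow> v = x + (y - x) * zt x y v"
  by (simp add: zt_def)

lemma zt_inj:
  assumes "x \<noteq> y" "Re (zt x y v) = Re (zt x y u)" "Im (zt x y v) = Im (zt x y u)"
  shows "v = u"
proof -
  have "zt x y v = zt x y u" using assms(2,3) by (rule complex_eqI)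
  then show ?thesis using zt_recover[OF assms(1), of v] zt_recover[OF assms(1), of u] by simp
qed

definition N1 :: "complex \<Rightarrow> complex \<Rightarrow> complex \<Rightarrow> real" where
  "N1 x y v = (Re (zt x y v))\<^sup>2 + (Im (zt x y v))\<^sup>2"
definition N2 :: "complex \<Rightarrow> complex \<Rightarrow> complex \<Rightarrow> real" where
  "N2 x y v = (Re (zt x y v) - 1)\<^sup>2 + (Im (zt x y v))\<^sup>2"

lemma dist_x_eq: "x \<noteq> y \<Longrightarrow> dist v x = cmod (y - x) * sqrt (N1 x y v)"
proof -
  assume "x \<noteq> y"
  have "v - x = (y - x) * zt x y v" using \<open>x \<noteq> y\<close> by (simp add: zt_def)
  then have "dist v x = cmod (y - x) * cmod (zt x y v)" by (simp add: dist_norm norm_mult)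
  then show ?thesis by (simp add: N1_def cmod_def)
qed

lemma dist_y_eq: "x \<noteq> y \<Longrightarrow> dist v y = cmod (y - x) * sqrt (N2 x y v)"
proof -
  assume "x \<noteq> y"
  have "v - y = (y - x) * (zt x y v - 1)" using \<open>x \<noteq> y\<close> by (simp add: zt_def field_simps)
  then have "dist v y = cmod (y - x) * cmod (zt x y v - 1)" by (simp add: dist_norm norm_mult)
  then show ?thesis by (simp add: N2_def cmod_def)
qed

lemma dist_x_le_iff: "x \<noteq> y \<Longrightarrow> dist v x \<le> dist u x \<longleftrightarrow> N1 x y v \<le> N1 x y u"
  by (simp add: dist_x_eq N1_def)

lemma dist_y_le_iff: "x \<noteq> y \<Longrightarrow> dist v y \<le> dist u y \<longleftrightarrow> N2 x y v \<le> N2 x y u"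
  by (simp add: dist_y_eq N2_def)

lemma side_sign_eq: "x \<noteq> y \<Longrightarrow> side_sign x y v = (cmod (y - x))\<^sup>2 * Im (zt x y v)"
proof -
  assume "x \<noteq> y"
  have "v - x = (y - x) * zt x y v" using \<open>x \<noteq> y\<close> by (simp add: zt_def)
  then have "side_sign x y v = Im (cnj (y - x) * (y - x) * zt x y v)"
    by (simp add: side_sign_def mult.assoc)
  also have "cnj (y - x) * (y - x) = of_real ((cmod (y - x))\<^sup>2)"
    using complex_norm_square[of "y - x"] by (simp add: mult.commute)
  finally show ?thesis by simp
qed

lemma N_Re: "Re (zt x y v) = (N1 x y v - N2 x y v + 1) / 2"
  by (simp add: N1_def N2_def power2_eq_square algebra_simps)

lemma N_Re2: "2 * Re (zt x y v) = N1 x y v - N2 x y v + 1"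
  by (simp add: N1_def N2_def power2_eq_square algebra_simps)

lemma slender_N:
  assumes "x \<noteq> y" "slender_side x y g" "0 \<le> s" "s \<le> t" "t \<le> 1"
  shows "N1 x y (g s) \<le> N1 x y (g t)" "N2 x y (g t) \<le> N2 x y (g s)"
  using assms unfolding slender_side_def by (auto simp: dist_x_le_iff dist_y_le_iff)

lemma slender_Re_mono:
  assumes "x \<noteq> y" "slender_side x y g" "0 \<le> s" "s \<le> t" "t \<le> 1"
  shows "Re (zt x y (g s)) \<le> Re (zt x y (g t))"
  using slender_N[OF assms] by (simp add: N_Re divide_right_mono)

lemma slender_Re_strict:
  assumes xy: "x \<noteq> y" and arc: "arc g" and sl: "slender_side x y g"
    and st: "0 \<le> s" "s < t" "t \<le> 1"
  shows "Re (zt x y (g s)) < Re (zt x y (g t))"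
proof (rule ccontr)
  assume "\<not> ?thesis"
  then have eqRe: "Re (zt x y (g s)) = Re (zt x y (g t))"
    using slender_Re_mono[OF xy sl st(1) _ st(3)] st(2) by force
  have n1: "N1 x y (g s) \<le> N1 x y (g t)" and n2: "N2 x y (g t) \<le> N2 x y (g s)"
    using slender_N[OF xy sl st(1) _ st(3)] st(2) by auto
  have e1: "N1 x y (g s) = N1 x y (g t)" and e2: "N2 x y (g s) = N2 x y (g t)"
    using eqRe n1 n2 N_Re2[of x y "g s"] N_Re2[of x y "g t"] by linarith+
  have sqI: "(Im (zt x y (g s)))\<^sup>2 = (Im (zt x y (g t)))\<^sup>2"
    using e1 eqRe by (simp add: N1_def)
  have mid: "(Im (zt x y (g u)))\<^sup>2 = (Im (zt x y (g s)))\<^sup>2" if "s \<le> u" "u \<le> t" for u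
  proof -
    have a: "N1 x y (g s) \<le> N1 x y (g u)" "N1 x y (g u) \<le> N1 x y (g t)"
      "N2 x y (g u) \<le> N2 x y (g s)" "N2 x y (g t) \<le> N2 x y (g u)"
      using slender_N[OF xy sl, of s u] slender_N[OF xy sl, of u t] that st by auto
    then have "N1 x y (g u) = N1 x y (g s)" "Re (zt x y (g u)) = Re (zt x y (g s))"
      using e1 e2 a N_Re2[of x y "g s"] N_Re2[of x y "g u"] by linarith+
    then show ?thesis by (simp add: N1_def)
  qed
  have inj: "inj_on g {0..1}" using arc by (simp add: arc_def)
  have "g s \<noteq> g t"
  proof
    assume "g s = g t"
    then have "s = t" using inj st by (intro inj_onD[OF inj]) auto
    then show False using st by simp
  qed
  then have neqI: "Im (zt x y (g s)) \<noteq> Im (zt x y (g t))"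
    using zt_inj[OF xy eqRe] by blast
  then have opp: "Im (zt x y (g t)) = - Im (zt x y (g s))" "Im (zt x y (g s)) \<noteq> 0"
    using sqI by (auto simp: power2_eq_iff)
  have cg: "continuous_on {0..1} g" using arc by (simp add: arc_def path_def)
  have "continuous_on {s..t} g" using st by (intro continuous_on_subset[OF cg]) auto
  then have cont: "continuous_on {s..t} (\<lambda>u. Im (zt x y (g u)))"
    unfolding zt_def using xy by (intro continuous_intros) auto
  have "\<exists>u. s \<le> u \<and> u \<le> t \<and> Im (zt x y (g u)) = 0"
  proof (cases "Im (zt x y (g s)) < 0")
    case True
    then show ?thesis using IVT'[OF _ _ _ cont, of 0] opp st by auto
  next
    case False
    then show ?thesis using IVT2'[OF _ _ _ cont, of 0] opp st by auto
  qed
  then obtain u where "s \<le> u" "u \<le> t" "Im (zt x y (g u)) = 0" by blast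
  then show False using mid[of u] opp by simp
qed

lemma slender_graph:
  assumes xy: "x \<noteq> y" and arc: "arc g" and ps: "pathstart g = x" and pf: "pathfinish g = y"
    and sl: "slender_side x y g"
  obtains G where "continuous_on {0..1} G" "G ` {0..1} = path_image g"
    "\<And>t. t \<in> {0..1} \<Longrightarrow> Re (zt x y (G t)) = t" "G 0 = x" "G 1 = y"
    "\<And>s t. 0 \<le> s \<Longrightarrow> s \<le> t \<Longrightarrow> t \<le> 1 \<Longrightarrow>
        N1 x y (G s) \<le> N1 x y (G t) \<and> N2 x y (G t) \<le> N2 x y (G s)"
proof -
  define f where "f u = Re (zt x y (g u))" for u
  have cg: "continuous_on {0..1} g" using arc by (simp add: arc_def path_def)
  have cf: "continuous_on {0..1} f"
    unfolding f_def zt_def using xy by (intro continuous_intros cg) auto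
  have sm: "f s < f t" if "0 \<le> s" "s < t" "t \<le> 1" for s t
    unfolding f_def using slender_Re_strict[OF xy arc sl that] .
  have g0: "g 0 = x" using ps by (simp add: pathstart_def)
  have g1: "g 1 = y" using pf by (simp add: pathfinish_def)
  have f0: "f 0 = 0" by (simp add: f_def g0)
  have f1: "f 1 = 1" using xy by (simp add: f_def g1)
  have inj: "inj_on f {0..1}"
  proof (rule inj_onI)
    fix a b assume ab: "a \<in> {0..1}" "b \<in> {0..1}" "f a = f b"
    show "a = b"
    proof (rule ccontr)
      assume "a \<noteq> b"
      then consider "a < b" | "b < a" by linarith
      then show False using sm ab by (cases; fastforce)
    qed
  qed
  have img: "f ` {0..1} = {0..1}"
  proof
    show "f ` {0..1} \<subseteq> {0..1}"
    proof
      fix v assume "v \<in> f ` {0..1}"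
      then obtain u where u: "u \<in> {0..1}" "v = f u" by blast
      have "f 0 \<le> f u" "f u \<le> f 1"
        using slender_Re_mono[OF xy sl, of 0 u] slender_Re_mono[OF xy sl, of u 1] u
        by (auto simp: f_def)
      then show "v \<in> {0..1}" using u f0 f1 by simp
    qed
  next
    have "connected (f ` {0..1})" by (rule connected_continuous_image[OF cf connected_Icc])
    moreover have "0 \<in> f ` {0..1}" "1 \<in> f ` {0..1}"
      using f0 f1 by (auto intro!: image_eqI[where x=0] image_eqI[where x=1])
    ultimately show "{0..1} \<subseteq> f ` {0..1}" using connected_contains_Icc by blast
  qed
  define \<sigma> where "\<sigma> = inv_into {0..1} f"
  have \<sigma>f: "\<sigma> (f u) = u" if "u \<in> {0..1}" for u
    unfolding \<sigma>_def using inv_into_f_f[OF inj that] .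
  have f\<sigma>: "f (\<sigma> t) = t" if "t \<in> {0..1}" for t
    unfolding \<sigma>_def using f_inv_into_f[of t f "{0..1}"] that img by simp
  have \<sigma>in: "\<sigma> t \<in> {0..1}" if "t \<in> {0..1}" for t
    unfolding \<sigma>_def using inv_into_into[of t f "{0..1}"] that img by simp
  have c\<sigma>: "continuous_on {0..1} \<sigma>"
    using continuous_on_inv[OF cf compact_Icc, of \<sigma>] \<sigma>f img by simp
  have \<sigma>img: "\<sigma> ` {0..1} = {0..1}"
  proof
    show "\<sigma> ` {0..1} \<subseteq> {0..1}" using \<sigma>in by auto
    show "{0..1} \<subseteq> \<sigma> ` {0..1}"
    proof
      fix u :: real assume u: "u \<in> {0..1}"
      then have "f u \<in> {0..1}" using img by blast
      then show "u \<in> \<sigma> ` {0..1}" using \<sigma>f[OF u] by (metis image_eqI)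
    qed
  qed
  define G where "G = g \<circ> \<sigma>"
  have cG: "continuous_on {0..1} G"
    unfolding G_def by (rule continuous_on_compose[OF c\<sigma>]) (simp add: \<sigma>img cg)
  have imG: "G ` {0..1} = path_image g"
    unfolding G_def path_image_def image_comp[symmetric] \<sigma>img ..
  have ReG: "Re (zt x y (G t)) = t" if "t \<in> {0..1}" for t
    using f\<sigma>[OF that] by (simp add: G_def f_def)
  have G0: "G 0 = x" using \<sigma>f[of 0] f0 g0 by (simp add: G_def)
  have G1: "G 1 = y" using \<sigma>f[of 1] f1 g1 by (simp add: G_def)
  have mono: "\<sigma> s \<le> \<sigma> t" if "0 \<le> s" "s \<le> t" "t \<le> 1" for s t
  proof (rule ccontr)
    assume "\<not> ?thesis"
    then have "\<sigma> t < \<sigma> s" by simp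
    moreover have "\<sigma> s \<in> {0..1}" "\<sigma> t \<in> {0..1}" using \<sigma>in that by auto
    ultimately have "f (\<sigma> t) < f (\<sigma> s)" using sm by auto
    then show False using f\<sigma>[of s] f\<sigma>[of t] that by auto
  qed
  have chain: "N1 x y (G s) \<le> N1 x y (G t) \<and> N2 x y (G t) \<le> N2 x y (G s)"
    if "0 \<le> s" "s \<le> t" "t \<le> 1" for s t
  proof -
    have "\<sigma> s \<in> {0..1}" "\<sigma> t \<in> {0..1}" using \<sigma>in that by auto
    then show ?thesis using slender_N[OF xy sl, of "\<sigma> s" "\<sigma> t"] mono[OF that]
      by (auto simp: G_def)
  qed
  show ?thesis using that[OF cG imG ReG G0 G1 chain] by blast
qed

lemma sq_le_1_bounds:
  fixes b :: real
  assumes "b\<^sup>2 \<le> 1" "(b - 1)\<^sup>2 \<le> 1"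
  shows "0 \<le> b" "b \<le> 1"
proof -
  have "\<bar>b\<bar> \<le> 1" "\<bar>b - 1\<bar> \<le> 1" using assms by (simp_all add: abs_square_le_1)
  then show "0 \<le> b" "b \<le> 1" by linarith+
qed

lemma lens_graph:
  assumes xy: "x \<noteq> y" and ReG: "\<And>t. t \<in> {0..1} \<Longrightarrow> Re (zt x y (G t)) = t"
    and G0: "G 0 = x" and G1: "G 1 = y"
    and chain: "\<And>s t. 0 \<le> s \<Longrightarrow> s \<le> t \<Longrightarrow> t \<le> 1 \<Longrightarrow>
        N1 x y (G s) \<le> N1 x y (G t) \<and> N2 x y (G t) \<le> N2 x y (G s)"
    and z: "0 \<le> Re (zt x y z)" "Re (zt x y z) \<le> 1"
      "\<bar>Im (zt x y z)\<bar> \<le> \<bar>Im (zt x y (G (Re (zt x y z))))\<bar>"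
    and w: "N1 x y w \<le> N1 x y z" "N2 x y w \<le> N2 x y z"
  shows "0 \<le> Re (zt x y w) \<and> Re (zt x y w) \<le> 1 \<and>
         \<bar>Im (zt x y w)\<bar> \<le> \<bar>Im (zt x y (G (Re (zt x y w))))\<bar>"
proof -
  define a where "a = Re (zt x y z)"
  define P where "P = G a"
  have ReP: "Re (zt x y P) = a" using ReG z by (simp add: P_def a_def)
  have imP: "(Im (zt x y z))\<^sup>2 \<le> (Im (zt x y P))\<^sup>2"
    using z(3) by (simp add: abs_le_square_iff P_def a_def)
  have Pz1: "N1 x y z \<le> N1 x y P" and Pz2: "N2 x y z \<le> N2 x y P"
    using imP ReP by (simp_all add: N1_def N2_def a_def)
  have "N1 x y P \<le> N1 x y (G 1)" using chain[of a 1] z by (simp add: P_def a_def)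
  then have P1: "N1 x y P \<le> 1" using G1 xy by (simp add: N1_def)
  have "N2 x y P \<le> N2 x y (G 0)" using chain[of 0 a] z by (simp add: P_def a_def)
  then have P2: "N2 x y P \<le> 1" using G0 by (simp add: N2_def)
  define b where "b = Re (zt x y w)"
  define c where "c = Im (zt x y w)"
  have "b\<^sup>2 + c\<^sup>2 \<le> 1" "(b - 1)\<^sup>2 + c\<^sup>2 \<le> 1"
    using w Pz1 Pz2 P1 P2 by (simp_all add: N1_def N2_def b_def c_def)
  then have "b\<^sup>2 \<le> 1" "(b - 1)\<^sup>2 \<le> 1" by (smt (verit) zero_le_power2)+
  then have b01: "0 \<le> b" "b \<le> 1" using sq_le_1_bounds by blast+
  define Q where "Q = G b"
  have ReQ: "Re (zt x y Q) = b" using ReG b01 by (simp add: Q_def)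
  have "c\<^sup>2 \<le> (Im (zt x y Q))\<^sup>2"
  proof (cases "b \<le> a")
    case True
    then have "N2 x y P \<le> N2 x y Q" using chain[of b a] b01 z by (simp add: P_def Q_def a_def)
    then have "N2 x y w \<le> N2 x y Q" using w Pz2 by linarith
    then show ?thesis using ReQ by (simp add: N2_def b_def c_def)
  next
    case False
    then have "N1 x y P \<le> N1 x y Q" using chain[of a b] b01 z by (simp add: P_def Q_def a_def)
    then have "N1 x y w \<le> N1 x y Q" using w Pz1 by linarith
    then show ?thesis using ReQ by (simp add: N1_def b_def c_def)
  qed
  then show ?thesis using b01 by (simp add: abs_le_square_iff Q_def b_def c_def)
qed

lemma zt_ray: "x \<noteq> y \<Longrightarrow> zt x y (v + of_real r * \<i> * (y - x)) = zt x y v + of_real r * \<i>"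
  by (simp add: zt_def field_simps)

lemma region_core:
  assumes ad: "adornment A x y" and sides: "adornment_sides A x y g1 g2"
    and cG1: "continuous_on {0..1} G1" and imG1: "G1 ` {0..1} = path_image g1"
    and ReG1: "\<And>t. t \<in> {0..1} \<Longrightarrow> Re (zt x y (G1 t)) = t" and G10: "G1 0 = x" and G11: "G1 1 = y"
    and cG2: "continuous_on {0..1} G2" and imG2: "G2 ` {0..1} = path_image g2"
    and ReG2: "\<And>t. t \<in> {0..1} \<Longrightarrow> Re (zt x y (G2 t)) = t" and G20: "G2 0 = x" and G21: "G2 1 = y"
    and ord: "\<And>t. 0 < t \<Longrightarrow> t < 1 \<Longrightarrow> Im (zt x y (G2 t)) < Im (zt x y (G1 t))"
  shows "A = {v. 0 \<le> Re (zt x y v) \<and> Re (zt x y v) \<le> 1 \<and>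
                 Im (zt x y (G2 (Re (zt x y v)))) \<le> Im (zt x y v) \<and>
                 Im (zt x y v) \<le> Im (zt x y (G1 (Re (zt x y v))))}" (is "A = ?R")
proof -
  have xy: "x \<noteq> y" and cA: "compact A" and scA: "simply_connected A"
    using ad by (auto simp: adornment_def)
  have arc1: "arc g1" and arc2: "arc g2" and s1: "pathstart g1 = x" and f1: "pathfinish g1 = y"
    and s2: "pathstart g2 = x" and f2: "pathfinish g2 = y"
    and frA: "frontier A = path_image g1 \<union> path_image g2"
    and int12: "path_image g1 \<inter> path_image g2 = {x, y}"
    using sides by (auto simp: adornment_sides_def)
  define \<xi> where "\<xi> v = Re (zt x y v)" for v
  define \<eta> where "\<eta> v = Im (zt x y v)" for v
  define \<phi>1 where "\<phi>1 t = Im (zt x y (G1 t))" for t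
  define \<phi>2 where "\<phi>2 t = Im (zt x y (G2 t))" for t
  have R_eq: "?R = {v. 0 \<le> \<xi> v \<and> \<xi> v \<le> 1 \<and> \<phi>2 (\<xi> v) \<le> \<eta> v \<and> \<eta> v \<le> \<phi>1 (\<xi> v)}"
    by (simp add: \<xi>_def \<eta>_def \<phi>1_def \<phi>2_def)
  define R where "R = {v. 0 \<le> \<xi> v \<and> \<xi> v \<le> 1 \<and> \<phi>2 (\<xi> v) \<le> \<eta> v \<and> \<eta> v \<le> \<phi>1 (\<xi> v)}"
  define R0 where "R0 = {v. 0 < \<xi> v \<and> \<xi> v < 1 \<and> \<phi>2 (\<xi> v) < \<eta> v \<and> \<eta> v < \<phi>1 (\<xi> v)}"
  have p10: "\<phi>1 0 = 0" "\<phi>1 1 = 0" "\<phi>2 0 = 0" "\<phi>2 1 = 0"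
    using G10 G11 G20 G21 xy by (simp_all add: \<phi>1_def \<phi>2_def)
  have ordle: "\<phi>2 t \<le> \<phi>1 t" if "0 \<le> t" "t \<le> 1" for t
  proof -
    show ?thesis
    proof (cases "t = 0 \<or> t = 1")
      case True then show ?thesis using p10 by auto
    next
      case False then show ?thesis using that ord[of t] by (auto simp: \<phi>1_def \<phi>2_def)
    qed
  qed
  have frA': "frontier A = G1 ` {0..1} \<union> G2 ` {0..1}" using frA imG1 imG2 by simp
  have JR: "frontier A \<subseteq> R"
  proof
    fix v assume "v \<in> frontier A"
    then obtain t where t: "t \<in> {0..1}" "v = G1 t \<or> v = G2 t" using frA' by auto
    then have "\<xi> v = t" using ReG1 ReG2 by (auto simp: \<xi>_def)
    then show "v \<in> R" using t ordle[of t] by (auto simp: R_def \<eta>_def \<phi>1_def \<phi>2_def)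
  qed
  have J0: "frontier A \<inter> R0 = {}"
  proof -
    { fix v assume "v \<in> frontier A" "v \<in> R0"
      then obtain t where t: "t \<in> {0..1}" "v = G1 t \<or> v = G2 t" using frA' by auto
      then have "\<xi> v = t" using ReG1 ReG2 by (auto simp: \<xi>_def)
      then have False using t \<open>v \<in> R0\<close> by (auto simp: R0_def \<eta>_def \<phi>1_def \<phi>2_def) }
    then show ?thesis by blast
  qed
  have clA: "closed A" and bA: "bounded A" using cA compact_imp_closed compact_imp_bounded by auto
  have frsub: "frontier A \<subseteq> A" using clA by (simp add: frontier_subset_closed)
  obtain B where Bpos: "B > 0" and B: "\<And>a. a \<in> A \<Longrightarrow> norm a \<le> B"
    using bA by (auto simp: bounded_pos)
  have ncm: "cmod (y - x) > 0" using xy by simp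
  have AR: "A \<subseteq> R"
  proof
    fix v assume vA: "v \<in> A"
    show "v \<in> R"
    proof (rule ccontr)
      assume vR: "v \<notin> R"
      define r where "r c t = v + of_real (c * t) * \<i> * (y - x)" for c t :: real
      have zr: "\<xi> (r c t) = \<xi> v" "\<eta> (r c t) = \<eta> v + c * t" for c t
        unfolding r_def \<xi>_def \<eta>_def zt_ray[OF xy] by simp_all
      obtain c where c: "c = 1 \<or> c = -1" and nR: "\<And>t. t \<ge> 0 \<Longrightarrow> r c t \<notin> R"
      proof -
        consider "\<not> (0 \<le> \<xi> v \<and> \<xi> v \<le> 1)" | "0 \<le> \<xi> v \<and> \<xi> v \<le> 1 \<and> \<eta> v > \<phi>1 (\<xi> v)"
          | "0 \<le> \<xi> v \<and> \<xi> v \<le> 1 \<and> \<eta> v < \<phi>2 (\<xi> v)"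
          using vR unfolding R_def by (metis (mono_tags, lifting) mem_Collect_eq not_le)
        then show ?thesis
        proof cases
          case 1 then show ?thesis using that[of 1] zr by (auto simp: R_def)
        next
          case 2 then show ?thesis using that[of 1] zr by (auto simp: R_def)
        next
          case 3 then show ?thesis using that[of "-1"] zr by (auto simp: R_def)
        qed
      qed
      have absc: "\<bar>c\<bar> = 1" using c by auto
      define Ray where "Ray = r c ` {0..}"
      have "connected Ray" unfolding Ray_def r_def
        by (intro connected_continuous_image connected_Ici continuous_intros)
      moreover have "Ray \<inter> A \<noteq> {}"
        using vA by (auto simp: Ray_def r_def intro!: image_eqI[where x=0])
      moreover have "Ray - A \<noteq> {}"
      proof -
        define t0 where "t0 = (B + norm v + 1) / cmod (y - x)"
        have t0: "t0 \<ge> 0" using Bpos ncm by (simp add: t0_def)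
        have "norm (of_real (c * t0) * \<i> * (y - x)) = t0 * cmod (y - x)"
          using absc t0 by (simp add: norm_mult abs_mult)
        also have "\<dots> = B + norm v + 1" using ncm by (simp add: t0_def)
        finally have e: "norm (of_real (c * t0) * \<i> * (y - x)) = B + norm v + 1" .
        have "norm (of_real (c * t0) * \<i> * (y - x)) \<le> norm (r c t0) + norm v"
          unfolding r_def using norm_triangle_ineq4[of "v + of_real (c * t0) * \<i> * (y - x)" v]
          by simp
        then have "norm (r c t0) > B" using e by linarith
        then have "r c t0 \<notin> A" using B by force
        then show ?thesis using t0 by (auto simp: Ray_def)
      qed
      ultimately have "Ray \<inter> frontier A \<noteq> {}" by (rule connected_Int_frontier)
      then obtain t where "t \<ge> 0" "r c t \<in> frontier A" by (auto simp: Ray_def)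
      then show False using JR nR by blast
    qed
  qed
  have RR0: "R \<subseteq> R0 \<union> frontier A"
  proof
    fix v assume vR: "v \<in> R"
    show "v \<in> R0 \<union> frontier A"
    proof (cases "v \<in> R0")
      case True then show ?thesis by simp
    next
      case False
      have fr1: "G1 t \<in> frontier A" "G2 t \<in> frontier A" if "t \<in> {0..1}" for t
        using frA' that by auto
      consider "\<xi> v = 0" | "\<xi> v = 1" | "\<eta> v = \<phi>1 (\<xi> v)" | "\<eta> v = \<phi>2 (\<xi> v)"
        using False vR by (auto simp: R_def R0_def)
      then show ?thesis
      proof cases
        case 1
        then have "\<eta> v = 0" using vR p10 by (auto simp: R_def)
        then have "v = G1 0" using 1 G10 by (intro zt_inj[OF xy]) (auto simp: \<xi>_def \<eta>_def)
        then show ?thesis using fr1[of 0] by simp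
      next
        case 2
        then have "\<eta> v = 0" using vR p10 by (auto simp: R_def)
        then have "v = G1 1" using 2 G11 xy by (intro zt_inj[OF xy]) (auto simp: \<xi>_def \<eta>_def)
        then show ?thesis using fr1[of 1] by simp
      next
        case 3
        have "v = G1 (\<xi> v)" using 3 vR ReG1[of "\<xi> v"]
          by (intro zt_inj[OF xy]) (auto simp: \<xi>_def \<eta>_def \<phi>1_def R_def)
        then show ?thesis using fr1[of "\<xi> v"] vR by (auto simp: R_def)
      next
        case 4
        have "v = G2 (\<xi> v)" using 4 vR ReG2[of "\<xi> v"]
          by (intro zt_inj[OF xy]) (auto simp: \<xi>_def \<eta>_def \<phi>2_def R_def)
        then show ?thesis using fr1[of "\<xi> v"] vR by (auto simp: R_def)
      qed
    qed
  qed
  have R0conn: "connected R0"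
  proof -
    have c1: "continuous_on {0..1} \<phi>1"
      unfolding \<phi>1_def zt_def using xy by (intro continuous_intros cG1) auto
    have c2: "continuous_on {0..1} \<phi>2"
      unfolding \<phi>2_def zt_def using xy by (intro continuous_intros cG2) auto
    define S :: "(real \<times> real) set" where "S = {0<..<1} \<times> {0<..<1}"
    have fstS: "fst ` S \<subseteq> {0..1}" by (auto simp: S_def)
    have c1': "continuous_on S (\<lambda>p. \<phi>1 (fst p))"
      by (rule continuous_on_compose2[OF c1 _ fstS]) (intro continuous_intros)
    have c2': "continuous_on S (\<lambda>p. \<phi>2 (fst p))"
      by (rule continuous_on_compose2[OF c2 _ fstS]) (intro continuous_intros)
    define F where "F p = x + (y - x) * (of_real (fst p) +
        \<i> * of_real ((1 - snd p) * \<phi>2 (fst p) + snd p * \<phi>1 (fst p)))" for p :: "real \<times> real"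
    have cF: "continuous_on S F"
      unfolding F_def by (intro continuous_intros c1' c2')
    have zF: "zt x y (F p) = of_real (fst p) + \<i> * of_real ((1 - snd p) * \<phi>2 (fst p) + snd p * \<phi>1 (fst p))" for p
      using xy by (simp add: F_def zt_def)
    have "connected S" unfolding S_def by (intro connected_Times connected_Ioo)
    then have cc: "connected (F ` S)" by (rule connected_continuous_image[OF cF])
    have "R0 = F ` S"
    proof
      show "F ` S \<subseteq> R0"
      proof
        fix v assume "v \<in> F ` S"
        then obtain t l where tl: "0 < t" "t < 1" "0 < l" "l < 1" "v = F (t, l)" by (auto simp: S_def)
        have o: "\<phi>2 t < \<phi>1 t" using ord[of t] tl by (simp add: \<phi>1_def \<phi>2_def)
        have e1: "(1 - l) * \<phi>2 t + l * \<phi>1 t - \<phi>2 t = l * (\<phi>1 t - \<phi>2 t)" by (simp add: algebra_simps)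
        have e2: "\<phi>1 t - ((1 - l) * \<phi>2 t + l * \<phi>1 t) = (1 - l) * (\<phi>1 t - \<phi>2 t)" by (simp add: algebra_simps)
        have p1: "l * (\<phi>1 t - \<phi>2 t) > 0" "(1 - l) * (\<phi>1 t - \<phi>2 t) > 0" using o tl by simp_all
        have "0 < (1 - l) * \<phi>2 t + l * \<phi>1 t - \<phi>2 t" by (subst e1) (rule p1(1))
        moreover have "0 < \<phi>1 t - ((1 - l) * \<phi>2 t + l * \<phi>1 t)" by (subst e2) (rule p1(2))
        ultimately have i1: "\<phi>2 t < (1 - l) * \<phi>2 t + l * \<phi>1 t" "(1 - l) * \<phi>2 t + l * \<phi>1 t < \<phi>1 t"
          by (simp_all only: diff_gt_0_iff_gt)
        have "\<xi> v = t" "\<eta> v = (1 - l) * \<phi>2 t + l * \<phi>1 t"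
          using zF[of "(t, l)"] tl(5) by (simp_all add: \<xi>_def \<eta>_def)
        then show "v \<in> R0" using tl i1 by (simp add: R0_def)
      qed
    next
      show "R0 \<subseteq> F ` S"
      proof
        fix v assume v: "v \<in> R0"
        define t where "t = \<xi> v"
        define l where "l = (\<eta> v - \<phi>2 t) / (\<phi>1 t - \<phi>2 t)"
        have t: "0 < t" "t < 1" and h: "\<phi>2 t < \<eta> v" "\<eta> v < \<phi>1 t" using v by (auto simp: R0_def t_def)
        have d: "\<phi>1 t - \<phi>2 t > 0" using h by simp
        have l: "0 < l" "l < 1" using h d by (auto simp: l_def field_simps)
        have "(1 - l) * \<phi>2 t + l * \<phi>1 t = \<phi>2 t + l * (\<phi>1 t - \<phi>2 t)" by (simp add: algebra_simps)
        also have "\<dots> = \<eta> v" using d by (simp add: l_def)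
        finally have e: "(1 - l) * \<phi>2 t + l * \<phi>1 t = \<eta> v" .
        have r1: "Re (zt x y (F (t, l))) = t" "Im (zt x y (F (t, l))) = \<eta> v"
          using zF[of "(t, l)"] e by simp_all
        have "v = F (t, l)"
          by (rule zt_inj[OF xy]) (simp_all only: r1, simp_all add: t_def \<xi>_def \<eta>_def)
        moreover have "(t, l) \<in> S" using t l by (simp add: S_def)
        ultimately show "v \<in> F ` S" by blast
      qed
    qed
    then show ?thesis using cc by simp
  qed
  have R0A: "R0 \<inter> A \<noteq> {}"
  proof
    assume R0A: "R0 \<inter> A = {}"
    have "A \<subseteq> frontier A" using AR RR0 R0A by blast
    then have Aeq: "A = path_image g1 \<union> path_image g2" using frsub frA by blast
    define c where "c = g1 +++ reversepath g2"
    have pic: "path_image c = A"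
      using Aeq f2 f1 by (simp add: c_def path_image_join path_image_reversepath)
    have spc: "simple_path c" unfolding c_def
      by (rule simple_path_join_loop) (use arc1 arc2 s1 s2 f1 f2 int12 in \<open>auto simp: arc_reversepath path_image_reversepath\<close>)
    have loop: "pathfinish c = pathstart c" using s1 s2 by (simp add: c_def)
    have "inside (path_image c) \<noteq> {}" using Jordan_inside_outside[OF spc loop] by blast
    then obtain v where v: "v \<in> inside (path_image c)" by blast
    have "winding_number c v \<noteq> 0"
      using simple_closed_path_winding_number_inside[OF spc] v by (metis zero_neq_one zero_neq_neg_one)
    moreover have "v \<notin> A" using v inside_no_overlap pic by blast
    ultimately show False
      using simply_connected_imp_winding_number_zero[OF scA simple_path_imp_path[OF spc] _ loop] pic by blast
  qed
  have "R0 \<subseteq> A"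
  proof (rule ccontr)
    assume "\<not> R0 \<subseteq> A"
    then have "R0 - A \<noteq> {}" by blast
    then have "R0 \<inter> frontier A \<noteq> {}" using connected_Int_frontier[OF R0conn R0A] by blast
    then show False using J0 by blast
  qed
  then have "R \<subseteq> A" using RR0 frsub by blast
  then show ?thesis using AR R_eq R_def by blast
qed

lemma zt_seg: "x \<noteq> y \<Longrightarrow> zt x y (x + of_real t * (y - x)) = of_real t"
  by (simp add: zt_def)

lemma mem_lens_N:
  assumes "x \<noteq> y" "w \<in> lens x y z"
  shows "N1 x y w \<le> N1 x y z" "N2 x y w \<le> N2 x y z"
  using assms by (auto simp: lens_def dist_commute dist_x_le_iff[symmetric] dist_y_le_iff[symmetric])

lemma half_core:
  assumes xy: "x \<noteq> y" and seg: "closed_segment x y \<subseteq> A"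
    and Aeq: "A = {v. 0 \<le> Re (zt x y v) \<and> Re (zt x y v) \<le> 1 \<and>
                 Im (zt x y (G2 (Re (zt x y v)))) \<le> Im (zt x y v) \<and>
                 Im (zt x y v) \<le> Im (zt x y (G1 (Re (zt x y v))))}"
    and ReG1: "\<And>t. t \<in> {0..1} \<Longrightarrow> Re (zt x y (G1 t)) = t" and G10: "G1 0 = x" and G11: "G1 1 = y"
    and ch1: "\<And>s t. 0 \<le> s \<Longrightarrow> s \<le> t \<Longrightarrow> t \<le> 1 \<Longrightarrow>
        N1 x y (G1 s) \<le> N1 x y (G1 t) \<and> N2 x y (G1 t) \<le> N2 x y (G1 s)"
    and ReG2: "\<And>t. t \<in> {0..1} \<Longrightarrow> Re (zt x y (G2 t)) = t" and G20: "G2 0 = x" and G21: "G2 1 = y"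
    and ch2: "\<And>s t. 0 \<le> s \<Longrightarrow> s \<le> t \<Longrightarrow> t \<le> 1 \<Longrightarrow>
        N1 x y (G2 s) \<le> N1 x y (G2 t) \<and> N2 x y (G2 t) \<le> N2 x y (G2 s)"
  shows "\<forall>z\<in>A. half_lens x y z \<subseteq> A"
proof (intro ballI subsetI)
  fix z w assume zA: "z \<in> A" and wH: "w \<in> half_lens x y z"
  define \<phi>1 where "\<phi>1 t = Im (zt x y (G1 t))" for t
  define \<phi>2 where "\<phi>2 t = Im (zt x y (G2 t))" for t
  have sgn: "\<phi>2 t \<le> 0 \<and> 0 \<le> \<phi>1 t" if "0 \<le> t" "t \<le> 1" for t
  proof -
    have "x + of_real t * (y - x) \<in> closed_segment x y"
      using that by (auto simp: closed_segment_def scaleR_conv_of_real algebra_simps intro!: exI[of _ t])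
    then have "x + of_real t * (y - x) \<in> A" using seg by blast
    then show ?thesis using zt_seg[OF xy, of t] by (simp add: Aeq \<phi>1_def \<phi>2_def)
  qed
  have wL: "w \<in> lens x y z" and ss: "side_sign x y z * side_sign x y w \<ge> 0"
    using wH by (auto simp: half_lens_def)
  have n: "N1 x y w \<le> N1 x y z" "N2 x y w \<le> N2 x y z" using mem_lens_N[OF xy wL] by auto
  have pos: "(cmod (y - x))\<^sup>2 > 0" using xy by simp
  have "side_sign x y z * side_sign x y w =
        ((cmod (y - x))\<^sup>2 * (cmod (y - x))\<^sup>2) * (Im (zt x y z) * Im (zt x y w))"
    by (simp add: side_sign_eq[OF xy])
  then have "Im (zt x y z) * Im (zt x y w) \<ge> 0" using ss pos
    by (metis zero_le_mult_iff mult_pos_pos not_le)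
  then consider "Im (zt x y z) \<ge> 0 \<and> Im (zt x y w) \<ge> 0" | "Im (zt x y z) \<le> 0 \<and> Im (zt x y w) \<le> 0"
    by (auto simp: zero_le_mult_iff)
  then show "w \<in> A"
  proof cases
    case 1
    have zR: "0 \<le> Re (zt x y z)" "Re (zt x y z) \<le> 1" "Im (zt x y z) \<le> \<phi>1 (Re (zt x y z))"
      using zA by (auto simp: Aeq \<phi>1_def)
    have "\<bar>Im (zt x y z)\<bar> \<le> \<bar>Im (zt x y (G1 (Re (zt x y z))))\<bar>"
      using 1 zR by (simp add: \<phi>1_def)
    from lens_graph[OF xy ReG1 G10 G11 ch1 zR(1,2) this n]
    have r: "0 \<le> Re (zt x y w)" "Re (zt x y w) \<le> 1" "\<bar>Im (zt x y w)\<bar> \<le> \<bar>\<phi>1 (Re (zt x y w))\<bar>"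
      by (auto simp: \<phi>1_def)
    have "\<phi>2 (Re (zt x y w)) \<le> 0" "0 \<le> \<phi>1 (Re (zt x y w))" using sgn r by auto
    then show ?thesis using r 1 by (simp add: Aeq \<phi>1_def \<phi>2_def)
  next
    case 2
    have zR: "0 \<le> Re (zt x y z)" "Re (zt x y z) \<le> 1" "\<phi>2 (Re (zt x y z)) \<le> Im (zt x y z)"
      using zA by (auto simp: Aeq \<phi>2_def)
    have "\<bar>Im (zt x y z)\<bar> \<le> \<bar>Im (zt x y (G2 (Re (zt x y z))))\<bar>"
      using 2 zR by (simp add: \<phi>2_def)
    from lens_graph[OF xy ReG2 G20 G21 ch2 zR(1,2) this n]
    have r: "0 \<le> Re (zt x y w)" "Re (zt x y w) \<le> 1" "\<bar>Im (zt x y w)\<bar> \<le> \<bar>\<phi>2 (Re (zt x y w))\<bar>"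
      by (auto simp: \<phi>2_def)
    have "\<phi>2 (Re (zt x y w)) \<le> 0" "0 \<le> \<phi>1 (Re (zt x y w))" using sgn r by auto
    then show ?thesis using r 2 by (simp add: Aeq \<phi>1_def \<phi>2_def)
  qed
qed


lemma adornment_sides_swap: "adornment_sides S x y g1 g2 \<Longrightarrow> adornment_sides S x y g2 g1"
  by (auto simp: adornment_sides_def)

lemma part1:
  fixes A :: "complex set" and x y :: complex
  assumes sl: "slender A x y"
  shows "\<forall>z\<in>A. half_lens x y z \<subseteq> A"
proof -
  have ad: "adornment A x y"
    and slall: "\<forall>g1 g2. adornment_sides A x y g1 g2 \<longrightarrow> slender_side x y g1 \<and> slender_side x y g2"
    using sl unfolding slender_def by blast+
  have xy: "x \<noteq> y" and seg: "closed_segment x y \<subseteq> A" using ad unfolding adornment_def by blast+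
  obtain g1 g2 where sides: "adornment_sides A x y g1 g2" using ad unfolding adornment_def by blast
  have sl1: "slender_side x y g1" and sl2: "slender_side x y g2"
    using slall sides by blast+
  have arc1: "arc g1" and arc2: "arc g2" and s1: "pathstart g1 = x" and f1: "pathfinish g1 = y"
    and s2: "pathstart g2 = x" and f2: "pathfinish g2 = y"
    and int12: "path_image g1 \<inter> path_image g2 = {x, y}"
    using sides by (auto simp: adornment_sides_def)
  obtain G1 where cG1: "continuous_on {0..1} G1" and imG1: "G1 ` {0..1} = path_image g1"
    and ReG1: "\<And>t. t \<in> {0..1} \<Longrightarrow> Re (zt x y (G1 t)) = t" and G10: "G1 0 = x" and G11: "G1 1 = y"
    and ch1: "\<And>s t. 0 \<le> s \<Longrightarrow> s \<le> t \<Longrightarrow> t \<le> 1 \<Longrightarrow>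
        N1 x y (G1 s) \<le> N1 x y (G1 t) \<and> N2 x y (G1 t) \<le> N2 x y (G1 s)"
    using slender_graph[OF xy arc1 s1 f1 sl1] by metis
  obtain G2 where cG2: "continuous_on {0..1} G2" and imG2: "G2 ` {0..1} = path_image g2"
    and ReG2: "\<And>t. t \<in> {0..1} \<Longrightarrow> Re (zt x y (G2 t)) = t" and G20: "G2 0 = x" and G21: "G2 1 = y"
    and ch2: "\<And>s t. 0 \<le> s \<Longrightarrow> s \<le> t \<Longrightarrow> t \<le> 1 \<Longrightarrow>
        N1 x y (G2 s) \<le> N1 x y (G2 t) \<and> N2 x y (G2 t) \<le> N2 x y (G2 s)"
    using slender_graph[OF xy arc2 s2 f2 sl2] by metis
  define d where "d t = Im (zt x y (G1 t)) - Im (zt x y (G2 t))" for t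
  have dne: "d t \<noteq> 0" if "0 < t" "t < 1" for t
  proof
    assume "d t = 0"
    then have "G1 t = G2 t" using ReG1[of t] ReG2[of t] that
      by (intro zt_inj[OF xy]) (auto simp: d_def)
    moreover have "G1 t \<in> path_image g1" "G2 t \<in> path_image g2" using imG1 imG2 that by auto
    ultimately have "G1 t \<in> path_image g1 \<inter> path_image g2" by simp
    then have "G1 t = x \<or> G1 t = y" using int12 by simp
    moreover have "Re (zt x y (G1 t)) = t" using ReG1[of t] that by simp
    ultimately show False using that xy by auto
  qed
  have cd: "continuous_on {0..1} d"
    unfolding d_def zt_def using xy by (intro continuous_intros cG1 cG2) auto
  have cases: "(\<forall>t. 0 < t \<and> t < 1 \<longrightarrow> d t > 0) \<or> (\<forall>t. 0 < t \<and> t < 1 \<longrightarrow> d t < 0)"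
  proof (rule ccontr)
    assume "\<not> ?thesis"
    then have "\<not> (\<forall>t. 0 < t \<and> t < 1 \<longrightarrow> d t > 0)" "\<not> (\<forall>t. 0 < t \<and> t < 1 \<longrightarrow> d t < 0)"
      by simp_all
    then obtain a b where a: "0 < a" "a < 1" "\<not> d a > 0" and b: "0 < b" "b < 1" "\<not> d b < 0"
      by blast
    then have a3: "d a \<le> 0" and b3: "d b \<ge> 0" by simp_all
    have "\<exists>u. min a b \<le> u \<and> u \<le> max a b \<and> d u = 0"
    proof (cases "a \<le> b")
      case True
      have "continuous_on {a..b} d" using a b by (intro continuous_on_subset[OF cd]) auto
      then show ?thesis using IVT'[of d a 0 b] a b a3 b3 True by auto
    next
      case False
      have "continuous_on {b..a} d" using a b by (intro continuous_on_subset[OF cd]) auto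
      then show ?thesis using IVT2'[of d a 0 b] a b a3 b3 False by auto
    qed
    then obtain u where "min a b \<le> u" "u \<le> max a b" "d u = 0" by blast
    then show False using dne[of u] a b by auto
  qed
  then show ?thesis
  proof
    assume pos: "\<forall>t. 0 < t \<and> t < 1 \<longrightarrow> d t > 0"
    have Aeq: "A = {v. 0 \<le> Re (zt x y v) \<and> Re (zt x y v) \<le> 1 \<and>
                 Im (zt x y (G2 (Re (zt x y v)))) \<le> Im (zt x y v) \<and>
                 Im (zt x y v) \<le> Im (zt x y (G1 (Re (zt x y v))))}"
      by (rule region_core[OF ad sides cG1 imG1 ReG1 G10 G11 cG2 imG2 ReG2 G20 G21])
         (use pos in \<open>auto simp: d_def\<close>)
    show ?thesis by (rule half_core[OF xy seg Aeq ReG1 G10 G11 ch1 ReG2 G20 G21 ch2])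
  next
    assume neg: "\<forall>t. 0 < t \<and> t < 1 \<longrightarrow> d t < 0"
    have Aeq: "A = {v. 0 \<le> Re (zt x y v) \<and> Re (zt x y v) \<le> 1 \<and>
                 Im (zt x y (G1 (Re (zt x y v)))) \<le> Im (zt x y v) \<and>
                 Im (zt x y v) \<le> Im (zt x y (G2 (Re (zt x y v))))}"
      by (rule region_core[OF ad adornment_sides_swap[OF sides] cG2 imG2 ReG2 G20 G21 cG1 imG1 ReG1 G10 G11])
         (use neg in \<open>auto simp: d_def\<close>)
    show ?thesis by (rule half_core[OF xy seg Aeq ReG2 G20 G21 ch2 ReG1 G10 G11 ch1])
  qed
qed

lemma zt_reflect: "x \<noteq> y \<Longrightarrow> zt x y (reflect_line x y w) = cnj (zt x y w)"
  by (simp add: zt_def reflect_line_def)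

theorem mainTheorem1:
  fixes A :: "complex set" and x y :: complex
  assumes "slender A x y"
  shows "(\<forall>z\<in>A. half_lens x y z \<subseteq> A) \<and>
         (symmetric_adornment A x y \<longrightarrow> (\<forall>z\<in>A. lens x y z \<subseteq> A))"
proof -
  have P1: "\<forall>z\<in>A. half_lens x y z \<subseteq> A" using part1[OF assms] .
  have xy: "x \<noteq> y" using assms by (simp add: slender_def adornment_def)
  have P2: "\<forall>z\<in>A. lens x y z \<subseteq> A" if sym: "symmetric_adornment A x y"
  proof (intro ballI subsetI)
    fix z w assume zA: "z \<in> A" and wL: "w \<in> lens x y z"
    define z' where "z' = reflect_line x y z"
    have z'A: "z' \<in> A" using sym zA by (auto simp: symmetric_adornment_def z'_def)
    have zz: "zt x y z' = cnj (zt x y z)" using zt_reflect[OF xy] by (simp add: z'_def)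
    have "N1 x y z' = N1 x y z" "N2 x y z' = N2 x y z" using zz by (simp_all add: N1_def N2_def)
    then have dd: "dist z' x = dist z x" "dist z' y = dist z y"
      by (simp_all add: dist_x_eq[OF xy] dist_y_eq[OF xy])
    have L': "lens x y z' = lens x y z" by (simp add: lens_def dd)
    have sz': "side_sign x y z' = - side_sign x y z" using zz by (simp add: side_sign_eq[OF xy])
    show "w \<in> A"
    proof (cases "side_sign x y z * side_sign x y w \<ge> 0")
      case True
      then have "w \<in> half_lens x y z" using wL by (simp add: half_lens_def)
      then show ?thesis using P1 zA by blast
    next
      case False
      then have "side_sign x y z' * side_sign x y w \<ge> 0" using sz' by simp
      then have "w \<in> half_lens x y z'" using wL L' by (simp add: half_lens_def)
      then show ?thesis using P1 z'A by blast
    qed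
  qed
  show ?thesis using P1 P2 by blast
qed

end
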